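(* Let $G$ be a finite simple connected graph with at least two vertices and diameter $D$. The following are equivalent: (1) $G$ is distance degree regular. (2) For every function $g:\{1,\dots,D\}\to\mathbb{R}$ and every $A\subseteq V(G)$ with $|A|>0$, $$E_g(A)-E_g(V(G)\setminus A)=\left(\frac{2|A|}{|V(G)|}-1\right)E_g(V(G)).$$ (3) For every function $g:\{1,\dots,D\}\to\mathbb{R}$, the complement of every minimizer of $E_g$ is a minimizer of $E_g$. (4) There exists a function $g:\{1,\dots,D\}\to\mathbb{R}$ such that $\{g(1),\dots,g(D)\}$ is linearly independent over $\mathbb{Q}$ and the complement of every minimizer of $E_g$ is a minimizer of $E_g$. Moreover, the equivalence remains true if in both (3) and (4) the word "minimizer" is replaced throughout by "local minimizer", or throughout by "maximizer", or throughout by "local maximizer".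
   Context: $d(u,v)$ is shortest-path distance in $G$. For $g:\{1,\dots,D\}\to\mathbb{R}$ and $A\subseteq V(G)$, $E_g(A)=\sum_{\{u,v\}\subseteq A,u\ne v}g(d(u,v))$ over unordered pairs ($E_g(A)=0$ if $|A|\le1$). For $F$ a real function on subsets of $V(G)$: $A$ is a minimizer (maximizer) of $F$ if $F(A)$ is the minimum (maximum) of $F(B)$ over all $B\subseteq V(G)$ with $|B|=|A|$. A perturbation of $A$ is a set $(A\setminus\{u\})\cup\{v\}$ with $u\in A$, $v\notin A$ and $uv$ an edge; $A$ is a local minimizer (maximizer) of $F$ if $F(A)$ equals the minimum (maximum) of $F(B)$ over all perturbations $B$ of $A$. The distance vector $\vec D(u)$ of a vertex $u$ is the non-decreasingly sorted tuple of distances from $u$ to all other vertices; $G$ is distance degree regular if $\vec D(u)=\vec D(v)$ for all vertices $u,v$ (equivalently, for each $i$, all vertices have the same number of vertices at distance $i$). *)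

theory Defs
  imports Complex_Main "HOL-Library.Multiset"
begin

definition simple_graph :: "'a set \<Rightarrow> ('a \<Rightarrow> 'a \<Rightarrow> bool) \<Rightarrow> bool" where
  "simple_graph V E \<longleftrightarrow> finite V \<and> (\<forall>u v. E u v \<longrightarrow> u \<in> V \<and> v \<in> V)
     \<and> (\<forall>u v. E u v \<longrightarrow> E v u) \<and> (\<forall>u. \<not> E u u)"

inductive walk :: "('a \<Rightarrow> 'a \<Rightarrow> bool) \<Rightarrow> 'a \<Rightarrow> 'a \<Rightarrow> nat \<Rightarrow> bool" for E where
  walk_nil: "walk E u u 0"
| walk_step: "E u w \<Longrightarrow> walk E w v n \<Longrightarrow> walk E u v (Suc n)"

definition connected_graph :: "'a set \<Rightarrow> ('a \<Rightarrow> 'a \<Rightarrow> bool) \<Rightarrow> bool" where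
  "connected_graph V E \<longleftrightarrow> (\<forall>u\<in>V. \<forall>v\<in>V. \<exists>n. walk E u v n)"

definition gdist :: "('a \<Rightarrow> 'a \<Rightarrow> bool) \<Rightarrow> 'a \<Rightarrow> 'a \<Rightarrow> nat" where
  "gdist E u v = (LEAST n. walk E u v n)"

definition diameter :: "'a set \<Rightarrow> ('a \<Rightarrow> 'a \<Rightarrow> bool) \<Rightarrow> nat" where
  "diameter V E = Max {gdist E u v | u v. u \<in> V \<and> v \<in> V}"

text \<open>E_g(A): sum of g(d(u,v)) over unordered pairs of distinct vertices of A
(each unordered pair counted once = half of the sum over ordered pairs).\<close>
definition energy :: "('a \<Rightarrow> 'a \<Rightarrow> bool) \<Rightarrow> (nat \<Rightarrow> real) \<Rightarrow> 'a set \<Rightarrow> real" where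
  "energy E g A = (\<Sum>u\<in>A. \<Sum>v\<in>A - {u}. g (gdist E u v)) / 2"

definition is_minimizer :: "'a set \<Rightarrow> ('a \<Rightarrow> 'a \<Rightarrow> bool) \<Rightarrow> ('a set \<Rightarrow> real) \<Rightarrow> 'a set \<Rightarrow> bool" where
  "is_minimizer V E F A \<longleftrightarrow> A \<subseteq> V \<and> (\<forall>B. B \<subseteq> V \<and> card B = card A \<longrightarrow> F A \<le> F B)"

definition is_maximizer :: "'a set \<Rightarrow> ('a \<Rightarrow> 'a \<Rightarrow> bool) \<Rightarrow> ('a set \<Rightarrow> real) \<Rightarrow> 'a set \<Rightarrow> bool" where
  "is_maximizer V E F A \<longleftrightarrow> A \<subseteq> V \<and> (\<forall>B. B \<subseteq> V \<and> card B = card A \<longrightarrow> F B \<le> F A)"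

definition perturbations :: "'a set \<Rightarrow> ('a \<Rightarrow> 'a \<Rightarrow> bool) \<Rightarrow> 'a set \<Rightarrow> 'a set set" where
  "perturbations V E A = {(A - {u}) \<union> {v} | u v. u \<in> A \<and> v \<in> V - A \<and> E u v}"

definition is_local_minimizer :: "'a set \<Rightarrow> ('a \<Rightarrow> 'a \<Rightarrow> bool) \<Rightarrow> ('a set \<Rightarrow> real) \<Rightarrow> 'a set \<Rightarrow> bool" where
  "is_local_minimizer V E F A \<longleftrightarrow> A \<subseteq> V \<and> (\<forall>B\<in>perturbations V E A. F A \<le> F B)"

definition is_local_maximizer :: "'a set \<Rightarrow> ('a \<Rightarrow> 'a \<Rightarrow> bool) \<Rightarrow> ('a set \<Rightarrow> real) \<Rightarrow> 'a set \<Rightarrow> bool" where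
  "is_local_maximizer V E F A \<longleftrightarrow> A \<subseteq> V \<and> (\<forall>B\<in>perturbations V E A. F B \<le> F A)"

definition distance_vector :: "'a set \<Rightarrow> ('a \<Rightarrow> 'a \<Rightarrow> bool) \<Rightarrow> 'a \<Rightarrow> nat list" where
  "distance_vector V E u = sorted_list_of_multiset (image_mset (gdist E u) (mset_set (V - {u})))"

definition distance_degree_regular :: "'a set \<Rightarrow> ('a \<Rightarrow> 'a \<Rightarrow> bool) \<Rightarrow> bool" where
  "distance_degree_regular V E \<longleftrightarrow> (\<forall>u\<in>V. \<forall>v\<in>V. distance_vector V E u = distance_vector V E v)"

text \<open>g(1),...,g(D) linearly independent over the rationals (as a family).\<close>
definition rat_lin_indep :: "nat \<Rightarrow> (nat \<Rightarrow> real) \<Rightarrow> bool" where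
  "rat_lin_indep D g \<longleftrightarrow> (\<forall>c :: nat \<Rightarrow> real. (\<forall>i\<in>{1..D}. c i \<in> \<rat>) \<longrightarrow>
      (\<Sum>i=1..D. c i * g i) = 0 \<longrightarrow> (\<forall>i\<in>{1..D}. c i = 0))"

end

theory Submission
  imports Defs "HOL-Analysis.Continuum_Not_Denumerable"
begin


lemma walk_snoc: "walk E u v n \<Longrightarrow> E v w \<Longrightarrow> walk E u w (Suc n)"
  by (induction rule: walk.induct) (auto intro: walk.intros)

lemma walk_rev: assumes s: "\<And>x y. E x y \<Longrightarrow> E y x" shows "walk E u v n \<Longrightarrow> walk E v u n"
proof (induction rule: walk.induct)
  case (walk_nil u) then show ?case by (rule walk.walk_nil)
next
  case (walk_step u w v n) then show ?case by (metis walk_snoc s)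
qed

lemma gdist_sym: assumes "simple_graph V E" shows "gdist E u v = gdist E v u"
proof -
  have s: "\<And>x y. E x y \<Longrightarrow> E y x" using assms by (auto simp: simple_graph_def)
  have w: "walk E u v n = walk E v u n" for n using walk_rev[where E=E, OF s] by blast
  show ?thesis unfolding gdist_def by (rule arg_cong[where f=Least]) (rule ext, rule w)
qed

lemma walk_gdist: assumes "connected_graph V E" "u \<in> V" "v \<in> V"
  shows "walk E u v (gdist E u v)"
  using assms unfolding connected_graph_def gdist_def by (metis LeastI)

lemma gdist_pos: assumes "connected_graph V E" "u \<in> V" "v \<in> V" "u \<noteq> v"
  shows "gdist E u v \<ge> 1"
proof (rule ccontr)
  assume "\<not> ?thesis" then have "gdist E u v = 0" by simp
  with walk_gdist[OF assms(1-3)] have "walk E u v 0" by simp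
  then have "u = v" by (cases rule: walk.cases) auto
  with assms show False by simp
qed

lemma gdist_le: assumes "finite V" "u \<in> V" "v \<in> V"
  shows "gdist E u v \<le> diameter V E"
proof -
  have "{gdist E u v | u v. u \<in> V \<and> v \<in> V} = (\<lambda>(u,v). gdist E u v) ` (V \<times> V)" by auto
  then have "finite {gdist E u v | u v. u \<in> V \<and> v \<in> V}" using assms by simp
  then show ?thesis unfolding diameter_def using assms by (intro Max_ge) auto
qed

lemma decomp:
  assumes "finite V" "A \<subseteq> V"
  shows "(\<Sum>u\<in>A. \<Sum>v\<in>V-{u}. h u v) = (\<Sum>u\<in>A. \<Sum>v\<in>A-{u}. h u v) + (\<Sum>u\<in>A. \<Sum>v\<in>V-A. h u v)"
proof -
  have "(\<Sum>v\<in>V-{u}. h u v) = (\<Sum>v\<in>A-{u}. h u v) + (\<Sum>v\<in>V-A. h u v)" if "u \<in> A" for u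
  proof -
    have "V - {u} = (A - {u}) \<union> (V - A)" using that assms by auto
    then show ?thesis using assms finite_subset[OF assms(2)]
      by (simp add: sum.union_disjoint Diff_Int_distrib2 Int_Diff) 
  qed
  then show ?thesis by (simp add: sum.distrib[symmetric])
qed

definition fsum :: "'a set \<Rightarrow> ('a \<Rightarrow> 'a \<Rightarrow> bool) \<Rightarrow> (nat \<Rightarrow> real) \<Rightarrow> 'a \<Rightarrow> real" where
  "fsum V E g u = (\<Sum>v\<in>V-{u}. g (gdist E u v))"

definition cnt :: "'a set \<Rightarrow> ('a \<Rightarrow> 'a \<Rightarrow> bool) \<Rightarrow> nat \<Rightarrow> 'a \<Rightarrow> nat" where
  "cnt V E i u = card {v\<in>V-{u}. gdist E u v = i}"

lemma energy_remove:
  assumes G: "simple_graph V E" and u: "u \<in> V"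
  shows "energy E g V = fsum V E g u + energy E g (V - {u})"
proof -
  define h where "h = (\<lambda>x y. g (gdist E x y))"
  have fin: "finite V" using G by (simp add: simple_graph_def)
  have hs: "h x y = h y x" for x y unfolding h_def using gdist_sym[OF G] by metis
  have 1: "(\<Sum>x\<in>V. \<Sum>y\<in>V-{x}. h x y) = (\<Sum>x\<in>V. \<Sum>y\<in>V-{x}. h x y)" ..
  have 2: "(\<Sum>x\<in>V. \<Sum>y\<in>V-{x}. h x y) = (\<Sum>y\<in>V-{u}. h u y) + (\<Sum>x\<in>V-{u}. \<Sum>y\<in>V-{x}. h x y)"
    using fin u by (simp add: sum.remove)
  have 3: "(\<Sum>x\<in>V-{u}. \<Sum>y\<in>V-{x}. h x y) = (\<Sum>x\<in>V-{u}. \<Sum>y\<in>(V-{u})-{x}. h x y) + (\<Sum>x\<in>V-{u}. \<Sum>y\<in>V-(V-{u}). h x y)"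
    using decomp[OF fin, of "V-{u}" h] by auto
  have 4: "V - (V - {u}) = {u}" using u by auto
  have 5: "(\<Sum>x\<in>V-{u}. h x u) = (\<Sum>y\<in>V-{u}. h u y)" using hs by simp
  have "(\<Sum>x\<in>V. \<Sum>y\<in>V-{x}. h x y) = 2 * (\<Sum>y\<in>V-{u}. h u y) + (\<Sum>x\<in>V-{u}. \<Sum>y\<in>(V-{u})-{x}. h x y)"
    using 2 3 4 5 by simp
  then show ?thesis unfolding energy_def fsum_def by (simp add: h_def)
qed

lemma identity:
  assumes G: "simple_graph V E" and c: "\<forall>u\<in>V. fsum V E g u = c" and A: "A \<subseteq> V" and n: "card V > 0"
  shows "energy E g A - energy E g (V - A) = (2 * real (card A) / real (card V) - 1) * energy E g V"
proof -
  define h where "h = (\<lambda>x y. g (gdist E x y))"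
  have fin: "finite V" using G by (simp add: simple_graph_def)
  have hs: "h x y = h y x" for x y unfolding h_def using gdist_sym[OF G] by metis
  define F where "F = (\<lambda>A. (\<Sum>u\<in>A. \<Sum>v\<in>A-{u}. h u v))"
  have en: "energy E g B = F B / 2" for B unfolding energy_def F_def h_def by simp
  have fs: "(\<Sum>v\<in>V-{u}. h u v) = c" if "u \<in> V" for u using c that unfolding fsum_def h_def by simp
  have sA: "(\<Sum>u\<in>A. \<Sum>v\<in>V-{u}. h u v) = real (card A) * c" using fs A by (simp add: subset_iff)
  have sB: "(\<Sum>u\<in>V-A. \<Sum>v\<in>V-{u}. h u v) = real (card (V-A)) * c" using fs by simp
  have sV: "(\<Sum>u\<in>V. \<Sum>v\<in>V-{u}. h u v) = real (card V) * c" using fs by simp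
  have dA: "(\<Sum>u\<in>A. \<Sum>v\<in>V-{u}. h u v) = F A + (\<Sum>u\<in>A. \<Sum>v\<in>V-A. h u v)"
    unfolding F_def by (rule decomp[OF fin A])
  have dB: "(\<Sum>u\<in>V-A. \<Sum>v\<in>V-{u}. h u v) = F (V-A) + (\<Sum>u\<in>V-A. \<Sum>v\<in>V-(V-A). h u v)"
    unfolding F_def by (rule decomp[OF fin]) auto
  have dV: "(\<Sum>u\<in>V. \<Sum>v\<in>V-{u}. h u v) = F V"
    unfolding F_def using decomp[OF fin, of V h] by simp
  have VV: "V - (V - A) = A" using A by auto
  have sw: "(\<Sum>u\<in>A. \<Sum>v\<in>V-A. h u v) = (\<Sum>u\<in>V-A. \<Sum>v\<in>A. h u v)"
    by (subst sum.swap) (simp add: hs)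
  have cd: "real (card (V-A)) = real (card V) - real (card A)"
    using A fin by (simp add: card_Diff_subset finite_subset card_mono of_nat_diff)
  have "F A - F (V - A) = real (card A) * c - (real (card V) - real (card A)) * c"
    using sA sB dA dB VV sw cd by simp
  moreover have "F V = real (card V) * c" using sV dV by simp
  moreover have "(2 * real (card A) / real (card V) - 1) * (real (card V) * c) = 2 * real (card A) * c - real (card V) * c"
    using n by (simp add: field_simps)
  ultimately show ?thesis unfolding en using n by (simp add: algebra_simps)
qed



lemma fsum_cnt:
  assumes G: "simple_graph V E" and C: "connected_graph V E" and u: "u \<in> V"
  shows "fsum V E g u = (\<Sum>i\<in>{1..diameter V E}. real (cnt V E i u) * g i)"
proof -
  have fin: "finite V" using G by (simp add: simple_graph_def)
  have sub: "gdist E u ` (V - {u}) \<subseteq> {1..diameter V E}"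
  proof (rule image_subsetI)
    fix v assume "v \<in> V - {u}"
    then show "gdist E u v \<in> {1..diameter V E}" using gdist_pos[OF C u, of v] gdist_le[OF fin u, of v] by auto
  qed
  have "fsum V E g u = (\<Sum>i\<in>{1..diameter V E}. \<Sum>v\<in>{v\<in>V-{u}. gdist E u v = i}. g (gdist E u v))"
    unfolding fsum_def using sum.group[OF _ _ sub, of "\<lambda>v. g (gdist E u v)"] fin by simp
  also have "\<dots> = (\<Sum>i\<in>{1..diameter V E}. real (cnt V E i u) * g i)"
    unfolding cnt_def by (intro sum.cong refl) simp
  finally show ?thesis .
qed

lemma cnt_out:
  assumes G: "simple_graph V E" and C: "connected_graph V E" and u: "u \<in> V" and i: "i \<notin> {1..diameter V E}"
  shows "cnt V E i u = 0"
proof -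
  have fin: "finite V" using G by (simp add: simple_graph_def)
  have e: "{v\<in>V-{u}. gdist E u v = i} = {}"
  proof (rule ccontr)
    assume "\<not> ?thesis" then obtain v where "v \<in> V - {u}" "gdist E u v = i" by blast
    then show False using gdist_pos[OF C u, of v] gdist_le[OF fin u, of v] i by auto
  qed
  show ?thesis unfolding cnt_def e by simp
qed

lemma count_M:
  assumes "finite V"
  shows "count (image_mset (gdist E u) (mset_set (V-{u}))) i = cnt V E i u"
proof -
  have fin: "finite (V - {u})" using assms by simp
  have e: "{x. x \<in># mset_set (V-{u}) \<and> i = gdist E u x} = {v\<in>V-{u}. gdist E u v = i}"
    using fin by auto
  have "count (image_mset (gdist E u) (mset_set (V-{u}))) i = (\<Sum>x\<in>{v\<in>V-{u}. gdist E u v = i}. count (mset_set (V-{u})) x)"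
    unfolding count_image_mset' e ..
  also have "\<dots> = (\<Sum>x\<in>{v\<in>V-{u}. gdist E u v = i}. 1)"
    using fin by (intro sum.cong refl) simp
  finally show ?thesis unfolding cnt_def by simp
qed

lemma DDR_iff:
  assumes G: "simple_graph V E"
  shows "distance_degree_regular V E \<longleftrightarrow> (\<forall>u\<in>V. \<forall>w\<in>V. \<forall>i. cnt V E i u = cnt V E i w)"
proof -
  have fin: "finite V" using G by (simp add: simple_graph_def)
  have "distance_vector V E u = distance_vector V E w \<longleftrightarrow> (\<forall>i. cnt V E i u = cnt V E i w)" for u w
  proof
    assume "distance_vector V E u = distance_vector V E w"
    then have "image_mset (gdist E u) (mset_set (V-{u})) = image_mset (gdist E w) (mset_set (V-{w}))"
      unfolding distance_vector_def by (metis mset_sorted_list_of_multiset)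
    then show "\<forall>i. cnt V E i u = cnt V E i w" by (metis count_M[OF fin])
  next
    assume "\<forall>i. cnt V E i u = cnt V E i w"
    then have "image_mset (gdist E u) (mset_set (V-{u})) = image_mset (gdist E w) (mset_set (V-{w}))"
      by (simp add: multiset_eq_iff count_M[OF fin])
    then show "distance_vector V E u = distance_vector V E w" unfolding distance_vector_def by simp
  qed
  then show ?thesis unfolding distance_degree_regular_def by blast
qed

lemma ddr_P:
  assumes G: "simple_graph V E" and C: "connected_graph V E" and D: "distance_degree_regular V E"
    and u: "u \<in> V" and w: "w \<in> V"
  shows "fsum V E g u = fsum V E g w"
proof -
  have "\<forall>i. cnt V E i u = cnt V E i w" using D u w unfolding DDR_iff[OF G] by blast
  then show ?thesis unfolding fsum_cnt[OF G C u] fsum_cnt[OF G C w] by simp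
qed

lemma P_ind_ddr:
  assumes G: "simple_graph V E"
    and P: "\<forall>i. \<forall>u\<in>V. \<forall>w\<in>V. fsum V E (\<lambda>k. if k = i then 1 else 0) u = fsum V E (\<lambda>k. if k = i then 1 else 0) w"
  shows "distance_degree_regular V E"
proof -
  have fin: "finite V" using G by (simp add: simple_graph_def)
  have "fsum V E (\<lambda>k. if k = i then 1 else 0) u = real (cnt V E i u)" for i u
  proof -
    have "(\<Sum>v\<in>V-{u}. if gdist E u v = i then (1::real) else 0) = (\<Sum>v\<in>{v\<in>V-{u}. gdist E u v = i}. 1)"
      using fin by (simp only: sum.inter_filter finite_Diff)
    then show ?thesis unfolding fsum_def cnt_def by simp
  qed
  note eq = this
  show ?thesis unfolding DDR_iff[OF G]
  proof (intro ballI allI)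
    fix u w i assume "u \<in> V" "w \<in> V"
    then have "fsum V E (\<lambda>k. if k = i then 1 else 0) u = fsum V E (\<lambda>k. if k = i then 1 else 0) w"
      using P by blast
    then show "cnt V E i u = cnt V E i w" unfolding eq by simp
  qed
qed

lemma P_indep_ddr:
  assumes G: "simple_graph V E" and C: "connected_graph V E"
    and R: "rat_lin_indep (diameter V E) g"
    and P: "\<forall>u\<in>V. \<forall>w\<in>V. fsum V E g u = fsum V E g w"
  shows "distance_degree_regular V E"
  unfolding DDR_iff[OF G]
proof (intro ballI allI)
  fix u w i assume u: "u \<in> V" and w: "w \<in> V"
  define c where "c = (\<lambda>i. real (cnt V E i u) - real (cnt V E i w))"
  have "(\<Sum>i=1..diameter V E. c i * g i) = fsum V E g u - fsum V E g w"
    unfolding fsum_cnt[OF G C u] fsum_cnt[OF G C w] c_def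
    by (simp only: left_diff_distrib sum_subtractf)
  also have "\<dots> = 0"
  proof -
    have "fsum V E g u = fsum V E g w" using P u w by blast
    then show ?thesis by simp
  qed
  finally have z: "(\<Sum>i=1..diameter V E. c i * g i) = 0" .
  have q: "\<forall>i\<in>{1..diameter V E}. c i \<in> \<rat>" unfolding c_def by (simp add: Rats_diff)
  have "(\<forall>i\<in>{1..diameter V E}. c i \<in> \<rat>) \<longrightarrow> (\<Sum>i=1..diameter V E. c i * g i) = 0 \<longrightarrow> (\<forall>i\<in>{1..diameter V E}. c i = 0)"
    using R unfolding rat_lin_indep_def by (rule spec)
  then have c0: "\<forall>i\<in>{1..diameter V E}. c i = 0" using q z by (rule mp[THEN mp])
  show "cnt V E i u = cnt V E i w"
  proof (cases "i \<in> {1..diameter V E}")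
    case True then show ?thesis using c0 unfolding c_def by simp
  next
    case False then show ?thesis using cnt_out[OF G C u False] cnt_out[OF G C w False] by simp
  qed
qed



lemma energy_single: "energy E g {u} = 0"
  unfolding energy_def by simp

lemma compl_shift:
  assumes G: "simple_graph V E" and n: "card V > 0"
    and I: "\<forall>A. A \<subseteq> V \<longrightarrow> energy E g A - energy E g (V - A) = (2 * real (card A) / real (card V) - 1) * energy E g V"
    and A: "A \<subseteq> V"
  shows "energy E g (V - A) = energy E g A + (1 - 2 * real (card A) / real (card V)) * energy E g V"
  using I A by (simp add: algebra_simps)

lemma card_compl: assumes "finite V" "A \<subseteq> V" shows "card (V - A) = card V - card A"
  using assms by (simp add: card_Diff_subset finite_subset)

lemma pert_compl:
  assumes G: "simple_graph V E" and A: "A \<subseteq> V" and B': "B' \<in> perturbations V E (V - A)"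
  shows "\<exists>B\<in>perturbations V E A. B' = V - B \<and> B \<subseteq> V \<and> card B = card A"
proof -
  have fin: "finite V" and s: "\<And>x y. E x y \<Longrightarrow> E y x" using G by (auto simp: simple_graph_def)
  from B' obtain u v where B'': "B' = ((V - A) - {u}) \<union> {v}" "u \<in> V - A" "v \<in> V - (V - A)" "E u v"
    unfolding perturbations_def by blast
  define B where "B = (A - {v}) \<union> {u}"
  have vA: "v \<in> A" "v \<in> V" using B'' by auto
  have "B \<in> perturbations V E A" unfolding perturbations_def B_def using B'' vA s by blast
  moreover have "B' = V - B" unfolding B_def B''(1) using B'' vA by auto
  moreover have "B \<subseteq> V" unfolding B_def using A B'' by auto
  moreover have "card B = card A"
  proof -
    have fA: "finite A" using A fin finite_subset by blast
    have "u \<notin> A - {v}" using B'' by auto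
    then have "card B = Suc (card (A - {v}))" unfolding B_def using fA by simp
    also have "\<dots> = card A" using vA fA card_Suc_Diff1 by metis
    finally show ?thesis .
  qed
  ultimately show ?thesis by blast
qed

lemma pert_sub: "B \<in> perturbations V E A \<Longrightarrow> A \<subseteq> V \<Longrightarrow> B \<subseteq> V"
  unfolding perturbations_def by auto

lemma opt_compl:
  assumes G: "simple_graph V E" and n: "card V > 0"
    and I: "\<forall>A. A \<subseteq> V \<longrightarrow> energy E g A - energy E g (V - A) = (2 * real (card A) / real (card V) - 1) * energy E g V"
  shows "is_minimizer V E (energy E g) A \<Longrightarrow> is_minimizer V E (energy E g) (V - A)"
    and "is_maximizer V E (energy E g) A \<Longrightarrow> is_maximizer V E (energy E g) (V - A)"
    and "is_local_minimizer V E (energy E g) A \<Longrightarrow> is_local_minimizer V E (energy E g) (V - A)"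
    and "is_local_maximizer V E (energy E g) A \<Longrightarrow> is_local_maximizer V E (energy E g) (V - A)"
proof -
  have fin: "finite V" using G by (simp add: simple_graph_def)
  define k where "k = (\<lambda>a::nat. (1 - 2 * real a / real (card V)) * energy E g V)"
  have sh: "energy E g (V - X) = energy E g X + k (card X)" if "X \<subseteq> V" for X
    unfolding k_def using compl_shift[OF G n I that] .
  have cb: "card (V - B) = card A" if "A \<subseteq> V" "B \<subseteq> V" "card B = card (V - A)" for A B
    using that card_compl[OF fin] card_mono[OF fin] by (metis diff_diff_cancel)
  have VV: "V - (V - B) = B" if "B \<subseteq> V" for B using that by auto
  {
    assume M: "is_minimizer V E (energy E g) A"
    then have A: "A \<subseteq> V" unfolding is_minimizer_def by simp
    show "is_minimizer V E (energy E g) (V - A)" unfolding is_minimizer_def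
    proof (intro conjI allI impI)
      fix B assume B: "B \<subseteq> V \<and> card B = card (V - A)"
      then have "energy E g A \<le> energy E g (V - B)" using M cb[OF A] unfolding is_minimizer_def by auto
      moreover have "energy E g B = energy E g (V - B) + k (card A)"
        using sh[of "V - B"] VV B cb[OF A] by auto
      ultimately show "energy E g (V - A) \<le> energy E g B" using sh[OF A] by simp
    qed auto
  }
  {
    assume M: "is_maximizer V E (energy E g) A"
    then have A: "A \<subseteq> V" unfolding is_maximizer_def by simp
    show "is_maximizer V E (energy E g) (V - A)" unfolding is_maximizer_def
    proof (intro conjI allI impI)
      fix B assume B: "B \<subseteq> V \<and> card B = card (V - A)"
      then have "energy E g (V - B) \<le> energy E g A" using M cb[OF A] unfolding is_maximizer_def by auto
      moreover have "energy E g B = energy E g (V - B) + k (card A)"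
        using sh[of "V - B"] VV B cb[OF A] by auto
      ultimately show "energy E g B \<le> energy E g (V - A)" using sh[OF A] by simp
    qed auto
  }
  {
    assume M: "is_local_minimizer V E (energy E g) A"
    then have A: "A \<subseteq> V" unfolding is_local_minimizer_def by simp
    show "is_local_minimizer V E (energy E g) (V - A)" unfolding is_local_minimizer_def
    proof (intro conjI ballI)
      fix B' assume "B' \<in> perturbations V E (V - A)"
      then obtain B where B: "B \<in> perturbations V E A" "B' = V - B" "B \<subseteq> V" "card B = card A"
        using pert_compl[OF G A] by blast
      have "energy E g A \<le> energy E g B" using M B unfolding is_local_minimizer_def by auto
      then show "energy E g (V - A) \<le> energy E g B'" using sh[OF A] sh[OF B(3)] B by simp
    qed auto
  }
  {
    assume M: "is_local_maximizer V E (energy E g) A"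
    then have A: "A \<subseteq> V" unfolding is_local_maximizer_def by simp
    show "is_local_maximizer V E (energy E g) (V - A)" unfolding is_local_maximizer_def
    proof (intro conjI ballI)
      fix B' assume "B' \<in> perturbations V E (V - A)"
      then obtain B where B: "B \<in> perturbations V E A" "B' = V - B" "B \<subseteq> V" "card B = card A"
        using pert_compl[OF G A] by blast
      have "energy E g B \<le> energy E g A" using M B unfolding is_local_maximizer_def by auto
      then show "energy E g B' \<le> energy E g (V - A)" using sh[OF A] sh[OF B(3)] B by simp
    qed auto
  }
qed



lemma walk_const:
  assumes "\<And>x y. E x y \<Longrightarrow> \<phi> x = \<phi> y"
  shows "walk E u v n \<Longrightarrow> \<phi> u = \<phi> v"
  by (induction rule: walk.induct) (use assms in auto)

lemma single_opt:
  assumes u: "u \<in> V"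
  shows "is_minimizer V E (energy E g) {u}" "is_maximizer V E (energy E g) {u}"
    "is_local_minimizer V E (energy E g) {u}" "is_local_maximizer V E (energy E g) {u}"
proof -
  have c1: "energy E g B = 0" if "card B = 1" for B
    using that by (metis card_1_singletonE energy_single)
  have p: "energy E g B = 0" if "B \<in> perturbations V E {u}" for B
    using that unfolding perturbations_def by (auto simp: energy_single)
  show "is_minimizer V E (energy E g) {u}" "is_maximizer V E (energy E g) {u}"
    "is_local_minimizer V E (energy E g) {u}" "is_local_maximizer V E (energy E g) {u}"
    unfolding is_minimizer_def is_maximizer_def is_local_minimizer_def is_local_maximizer_def
    using u c1 p by (auto simp: energy_single)
qed

lemma pert_single:
  assumes G: "simple_graph V E" and "E u w"
  shows "V - {w} \<in> perturbations V E (V - {u})"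
proof -
  have "u \<in> V" "w \<in> V" "u \<noteq> w" "E w u" using G assms(2) unfolding simple_graph_def by metis+
  then have "V - {w} = ((V - {u}) - {w}) \<union> {u}" by auto
  with \<open>u \<in> V\<close> \<open>w \<in> V\<close> \<open>u \<noteq> w\<close> \<open>E w u\<close> show ?thesis unfolding perturbations_def by blast
qed

lemma fsum_from_energy:
  assumes G: "simple_graph V E" and C: "connected_graph V E"
    and eq: "\<forall>u\<in>V. \<forall>w\<in>V. energy E g (V - {u}) = energy E g (V - {w})"
  shows "\<forall>u\<in>V. \<forall>w\<in>V. fsum V E g u = fsum V E g w"
proof (intro ballI)
  fix u w assume "u \<in> V" "w \<in> V"
  then show "fsum V E g u = fsum V E g w"
  proof -
    have "energy E g (V - {u}) = energy E g (V - {w})" using eq \<open>u \<in> V\<close> \<open>w \<in> V\<close> by blast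
    then show ?thesis using energy_remove[OF G \<open>u \<in> V\<close>, of g] energy_remove[OF G \<open>w \<in> V\<close>, of g] by linarith
  qed
qed

lemma edge_eq_all:
  assumes G: "simple_graph V E" and C: "connected_graph V E"
    and le: "\<And>u w. E u w \<Longrightarrow> \<phi> u \<le> (\<phi> w :: real)"
  shows "\<forall>u\<in>V. \<forall>w\<in>V. \<phi> u = \<phi> w"
proof (intro ballI)
  have s: "\<And>x y. E x y \<Longrightarrow> E y x" using G by (auto simp: simple_graph_def)
  have e: "\<phi> x = \<phi> y" if "E x y" for x y using le[OF that] le[OF s[OF that]] by simp
  fix u w assume "u \<in> V" "w \<in> V"
  then obtain n where "walk E u w n" using C unfolding connected_graph_def by blast
  then show "\<phi> u = \<phi> w" using walk_const[of E \<phi>] e by blast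
qed

lemma H_P:
  assumes G: "simple_graph V E" and C: "connected_graph V E"
    and Opt: "Opt \<in> {is_minimizer V E, is_local_minimizer V E, is_maximizer V E, is_local_maximizer V E}"
    and H: "\<forall>A. Opt (energy E g) A \<longrightarrow> Opt (energy E g) (V - A)"
  shows "\<forall>u\<in>V. \<forall>w\<in>V. fsum V E g u = fsum V E g w"
proof (rule fsum_from_energy[OF G C])
  have fin: "finite V" using G by (simp add: simple_graph_def)
  have cV: "card (V - {u}) = card (V - {w})" if "u \<in> V" "w \<in> V" for u w
    using that fin by simp
  have sV: "V - {u} \<subseteq> V" for u by auto
  show "\<forall>u\<in>V. \<forall>w\<in>V. energy E g (V - {u}) = energy E g (V - {w})"
  proof (cases "Opt = is_minimizer V E \<or> Opt = is_maximizer V E")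
    case True
    show ?thesis
    proof (intro ballI)
      fix u w assume u: "u \<in> V" and w: "w \<in> V"
      have "Opt (energy E g) (V - {u})" "Opt (energy E g) (V - {w})"
        using H single_opt[OF u, of E g] single_opt[OF w, of E g] True by auto
      then have "energy E g (V - {u}) \<le> energy E g (V - {w}) \<and> energy E g (V - {w}) \<le> energy E g (V - {u})"
        using True cV[OF u w] cV[OF w u] sV unfolding is_minimizer_def is_maximizer_def
        by auto
      then show "energy E g (V - {u}) = energy E g (V - {w})" by linarith
    qed
  next
    case False
    then have O: "Opt = is_local_minimizer V E \<or> Opt = is_local_maximizer V E" using Opt by auto
    show ?thesis
    proof (cases "Opt = is_local_minimizer V E")
      case True
      have "\<forall>u\<in>V. \<forall>w\<in>V. (\<lambda>x. energy E g (V - {x})) u = (\<lambda>x. energy E g (V - {x})) w"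
      proof (rule edge_eq_all[OF G C])
        fix u w assume e: "E u w"
        then have u: "u \<in> V" using G unfolding simple_graph_def by blast
        have "Opt (energy E g) (V - {u})" using H single_opt[OF u, of E g] True by auto
        then show "energy E g (V - {u}) \<le> energy E g (V - {w})"
          using pert_single[OF G e] True unfolding is_local_minimizer_def by auto
      qed
      then show ?thesis by blast
    next
      case False
      then have T: "Opt = is_local_maximizer V E" using O by simp
      have "\<forall>u\<in>V. \<forall>w\<in>V. (\<lambda>x. - energy E g (V - {x})) u = (\<lambda>x. - energy E g (V - {x})) w"
      proof (rule edge_eq_all[OF G C])
        fix u w assume e: "E u w"
        then have u: "u \<in> V" using G unfolding simple_graph_def by blast
        have "Opt (energy E g) (V - {u})" using H single_opt[OF u, of E g] T by auto
        then show "- energy E g (V - {u}) \<le> - energy E g (V - {w})"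
          using pert_single[OF G e] T unfolding is_local_maximizer_def by auto
      qed
      note h = this
      show ?thesis
      proof (intro ballI)
        fix u w assume "u \<in> V" "w \<in> V"
        then have "- energy E g (V - {u}) = - energy E g (V - {w})" using h by blast
        then show "energy E g (V - {u}) = energy E g (V - {w})" by simp
      qed
    qed
  qed
qed

lemma idt_P:
  assumes G: "simple_graph V E"
    and I: "\<forall>A. A \<subseteq> V \<and> card A > 0 \<longrightarrow> energy E g A - energy E g (V - A) = (2 * real (card A) / real (card V) - 1) * energy E g V"
  shows "\<forall>u\<in>V. \<forall>w\<in>V. fsum V E g u = fsum V E g w"
proof -
  have "fsum V E g u = energy E g V + (2 / real (card V) - 1) * energy E g V" if u: "u \<in> V" for u
  proof -
    have "energy E g {u} - energy E g (V - {u}) = (2 * real (card {u}) / real (card V) - 1) * energy E g V"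
      using I u by auto
    then show ?thesis using energy_remove[OF G u, of g] by (simp add: energy_single)
  qed
  then show ?thesis by simp
qed

lemma exists_indep: "\<exists>g. rat_lin_indep D g"
proof (induction D)
  case 0 show ?case unfolding rat_lin_indep_def by simp
next
  case (Suc D)
  then obtain g where g: "rat_lin_indep D g" by blast
  define S where "S = {(\<Sum>i=1..D. c i * g i) | c. \<forall>i\<in>{1..D}. c i \<in> \<rat>}"
  have "S \<subseteq> (\<lambda>xs. \<Sum>i=1..D. of_rat (xs ! i) * g i) ` UNIV"
  proof
    fix x assume "x \<in> S"
    then obtain c where c: "x = (\<Sum>i=1..D. c i * g i)" "\<forall>i\<in>{1..D}. c i \<in> \<rat>" unfolding S_def by blast
    define xs where "xs = map (\<lambda>i. SOME r. c i = of_rat r) [0..<Suc D]"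
    have "of_rat (xs ! i) = c i" if "i \<in> {1..D}" for i
    proof -
      have "\<exists>r. c i = of_rat r" using c(2) that Rats_cases by metis
      then have "c i = of_rat (SOME r. c i = of_rat r)" by (rule someI_ex)
      moreover have "xs ! i = (SOME r. c i = of_rat r)" unfolding xs_def using that
        by (simp del: upt_Suc add: nth_map_upt)
      ultimately show ?thesis by simp
    qed
    then have "x = (\<Sum>i=1..D. of_rat (xs ! i) * g i)" unfolding c(1) by simp
    then show "x \<in> (\<lambda>xs. \<Sum>i=1..D. of_rat (xs ! i) * g i) ` UNIV" by blast
  qed
  then have "countable S" by (rule countable_subset) simp
  then have "S \<noteq> UNIV" using uncountable_UNIV_real by auto
  then obtain y where y: "y \<notin> S" by blast
  define g' where "g' = g(Suc D := y)"
  have "rat_lin_indep (Suc D) g'" unfolding rat_lin_indep_def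
  proof (intro allI impI)
    fix c :: "nat \<Rightarrow> real"
    assume q: "\<forall>i\<in>{1..Suc D}. c i \<in> \<rat>" and z: "(\<Sum>i=1..Suc D. c i * g' i) = 0"
    have gg: "(\<Sum>i=1..D. c i * g' i) = (\<Sum>i=1..D. c i * g i)" unfolding g'_def by (intro sum.cong) auto
    have z2: "(\<Sum>i=1..D. c i * g i) + c (Suc D) * y = 0" using z gg unfolding g'_def by simp
    have cS: "c (Suc D) = 0"
    proof (rule ccontr)
      assume nz: "c (Suc D) \<noteq> 0"
      have "y = (\<Sum>i=1..D. (- c i / c (Suc D)) * g i)"
        using z2 nz by (simp add: sum_divide_distrib[symmetric] sum_negf field_simps)
      moreover have "\<forall>i\<in>{1..D}. - c i / c (Suc D) \<in> \<rat>" using q by (auto intro: Rats_divide simp: Rats_minus_iff)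
      ultimately have "y \<in> S" unfolding S_def
        by (intro CollectI exI[where x="\<lambda>i. - c i / c (Suc D)"]) simp
      with y show False by simp
    qed
    then have "(\<Sum>i=1..D. c i * g i) = 0" using z2 by simp
    moreover have "\<forall>i\<in>{1..D}. c i \<in> \<rat>" using q by auto
    moreover have "(\<forall>i\<in>{1..D}. c i \<in> \<rat>) \<longrightarrow> (\<Sum>i=1..D. c i * g i) = 0 \<longrightarrow> (\<forall>i\<in>{1..D}. c i = 0)"
      using g unfolding rat_lin_indep_def by (rule spec)
    ultimately have "\<forall>i\<in>{1..D}. c i = 0" by blast
    then show "\<forall>i\<in>{1..Suc D}. c i = 0" using cS by (auto simp: le_Suc_eq)
  qed
  then show ?case by blast
qed



theorem mainTheorem9:
  fixes V :: "'a set" and E :: "'a \<Rightarrow> 'a \<Rightarrow> bool"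
  assumes "simple_graph V E" and "connected_graph V E" and "card V \<ge> 2"
  defines "D \<equiv> diameter V E"
  shows "(distance_degree_regular V E \<longleftrightarrow>
           (\<forall>g :: nat \<Rightarrow> real. \<forall>A. A \<subseteq> V \<and> card A > 0 \<longrightarrow>
              energy E g A - energy E g (V - A)
                = (2 * real (card A) / real (card V) - 1) * energy E g V))
       \<and> (\<forall>Opt \<in> {is_minimizer V E, is_local_minimizer V E, is_maximizer V E, is_local_maximizer V E}.
            (distance_degree_regular V E \<longleftrightarrow>
               (\<forall>g :: nat \<Rightarrow> real. \<forall>A. Opt (energy E g) A \<longrightarrow> Opt (energy E g) (V - A)))
          \<and> (distance_degree_regular V E \<longleftrightarrow>
               (\<exists>g :: nat \<Rightarrow> real. rat_lin_indep D g \<and>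
                  (\<forall>A. Opt (energy E g) A \<longrightarrow> Opt (energy E g) (V - A)))))"
proof -
  note G = assms(1) and C = assms(2)
  have n: "card V > 0" using assms(3) by simp
  then obtain u0 where u0: "u0 \<in> V" by (metis card.empty card_gt_0_iff ex_in_conv less_irrefl)
  have idtAll: "\<forall>A. A \<subseteq> V \<longrightarrow> energy E g A - energy E g (V - A) = (2 * real (card A) / real (card V) - 1) * energy E g V"
    if DR: "distance_degree_regular V E" for g
  proof (intro allI impI)
    fix A assume A: "A \<subseteq> V"
    have "\<forall>u\<in>V. fsum V E g u = fsum V E g u0" using ddr_P[OF G C DR _ u0] by blast
    then show "energy E g A - energy E g (V - A) = (2 * real (card A) / real (card V) - 1) * energy E g V"
      using identity[OF G _ A n] by blast
  qed
  have HAll: "\<forall>A. Opt (energy E g) A \<longrightarrow> Opt (energy E g) (V - A)"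
    if DR: "distance_degree_regular V E"
      and O: "Opt \<in> {is_minimizer V E, is_local_minimizer V E, is_maximizer V E, is_local_maximizer V E}" for Opt g
    using O opt_compl[OF G n idtAll[OF DR, of g]] by auto
  define ind where "ind = (\<lambda>i::nat. (\<lambda>k::nat. if k = i then (1::real) else 0))"
  have part1: "distance_degree_regular V E \<longleftrightarrow>
           (\<forall>g :: nat \<Rightarrow> real. \<forall>A. A \<subseteq> V \<and> card A > 0 \<longrightarrow>
              energy E g A - energy E g (V - A)
                = (2 * real (card A) / real (card V) - 1) * energy E g V)"
  proof
    assume "distance_degree_regular V E"
    then show "\<forall>g :: nat \<Rightarrow> real. \<forall>A. A \<subseteq> V \<and> card A > 0 \<longrightarrow>
              energy E g A - energy E g (V - A)
                = (2 * real (card A) / real (card V) - 1) * energy E g V"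
      using idtAll by blast
  next
    assume I: "\<forall>g :: nat \<Rightarrow> real. \<forall>A. A \<subseteq> V \<and> card A > 0 \<longrightarrow>
              energy E g A - energy E g (V - A)
                = (2 * real (card A) / real (card V) - 1) * energy E g V"
    show "distance_degree_regular V E"
    proof (rule P_ind_ddr[OF G])
      show "\<forall>i. \<forall>u\<in>V. \<forall>w\<in>V. fsum V E (\<lambda>k. if k = i then 1 else 0) u = fsum V E (\<lambda>k. if k = i then 1 else 0) w"
      proof
        fix i
        show "\<forall>u\<in>V. \<forall>w\<in>V. fsum V E (\<lambda>k. if k = i then 1 else 0) u = fsum V E (\<lambda>k. if k = i then 1 else 0) w"
          by (rule idt_P[OF G]) (use I in blast)
      qed
    qed
  qed
  have part2: "(distance_degree_regular V E \<longleftrightarrow>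
               (\<forall>g :: nat \<Rightarrow> real. \<forall>A. Opt (energy E g) A \<longrightarrow> Opt (energy E g) (V - A)))
          \<and> (distance_degree_regular V E \<longleftrightarrow>
               (\<exists>g :: nat \<Rightarrow> real. rat_lin_indep D g \<and>
                  (\<forall>A. Opt (energy E g) A \<longrightarrow> Opt (energy E g) (V - A))))"
    if O: "Opt \<in> {is_minimizer V E, is_local_minimizer V E, is_maximizer V E, is_local_maximizer V E}" for Opt
  proof (intro conjI iffI)
    assume "distance_degree_regular V E"
    then show "\<forall>g :: nat \<Rightarrow> real. \<forall>A. Opt (energy E g) A \<longrightarrow> Opt (energy E g) (V - A)"
      using HAll[OF _ O] by blast
  next
    assume H: "\<forall>g :: nat \<Rightarrow> real. \<forall>A. Opt (energy E g) A \<longrightarrow> Opt (energy E g) (V - A)"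
    show "distance_degree_regular V E"
    proof (rule P_ind_ddr[OF G])
      show "\<forall>i. \<forall>u\<in>V. \<forall>w\<in>V. fsum V E (\<lambda>k. if k = i then 1 else 0) u = fsum V E (\<lambda>k. if k = i then 1 else 0) w"
      proof
        fix i
        show "\<forall>u\<in>V. \<forall>w\<in>V. fsum V E (\<lambda>k. if k = i then 1 else 0) u = fsum V E (\<lambda>k. if k = i then 1 else 0) w"
          by (rule H_P[OF G C O]) (use H in blast)
      qed
    qed
  next
    assume DR: "distance_degree_regular V E"
    obtain g where "rat_lin_indep D g" using exists_indep by blast
    then show "\<exists>g :: nat \<Rightarrow> real. rat_lin_indep D g \<and> (\<forall>A. Opt (energy E g) A \<longrightarrow> Opt (energy E g) (V - A))"
      using HAll[OF DR O] by blast
  next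
    assume "\<exists>g :: nat \<Rightarrow> real. rat_lin_indep D g \<and> (\<forall>A. Opt (energy E g) A \<longrightarrow> Opt (energy E g) (V - A))"
    then obtain g where R: "rat_lin_indep D g" and H: "\<forall>A. Opt (energy E g) A \<longrightarrow> Opt (energy E g) (V - A)"
      by blast
    show "distance_degree_regular V E"
      by (rule P_indep_ddr[OF G C R[unfolded D_def] H_P[OF G C O H]])
  qed
  show ?thesis using part1 part2 by blast
qed


end
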